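(* Let $A,B$ be unital $k$-algebras and $f:B\to A$ an algebra homomorphism, not necessarily unital, such that $f(1_B)$ lies in the center of $A$. Then the modulation of $f$ is invertible in $\mathsf{Alg}$ if and only if $f$ is an isomorphism from $B$ onto $A\cdot f(1_B)$ and $f(1_B)$ is not a zero divisor in $A$.
   Context: $k$ is a commutative ring; all algebras are unital $k$-algebras. The category $\mathsf{Alg}$ has unital $k$-algebras as objects and, as morphisms to $A$ from $B$, isomorphism classes of biunital $(A,B)$-bimodules, composed by $X\otimes_B Y$; invertible morphisms are Morita equivalences. The modulation of a not necessarily unital homomorphism $f:B\to A$ is the left ideal $A\cdot f(1_B)\subset A$ with the biunital $(A,B)$-bimodule structure $a\cdot x\cdot b=a\,x\,f(b)$. *)

theory Defs
  imports Main "HOL-Library.Function_Algebras"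
begin

definition k_algebra :: "('k::comm_ring_1 \<Rightarrow> 'a::ring_1) \<Rightarrow> bool" where
  "k_algebra \<iota> \<longleftrightarrow> \<iota> 1 = 1 \<and> (\<forall>c d. \<iota> (c + d) = \<iota> c + \<iota> d) \<and> (\<forall>c d. \<iota> (c * d) = \<iota> c * \<iota> d)
     \<and> (\<forall>c a. \<iota> c * a = a * \<iota> c)"

definition alg_hom_nonunital :: "('k::comm_ring_1 \<Rightarrow> 'a::ring_1) \<Rightarrow> ('k \<Rightarrow> 'b::ring_1) \<Rightarrow> ('b \<Rightarrow> 'a) \<Rightarrow> bool" where
  "alg_hom_nonunital \<iota>A \<iota>B f \<longleftrightarrow> (\<forall>x y. f (x + y) = f x + f y) \<and> (\<forall>x y. f (x * y) = f x * f y)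
     \<and> (\<forall>c x. f (\<iota>B c * x) = \<iota>A c * f x)"

text \<open>A biunital, k-central (R,S)-bimodule with carrier X, a subgroup of an abelian group type.
  R and S are unital k-algebras given by their structure maps.\<close>
definition bimod :: "('k::comm_ring_1 \<Rightarrow> 'r::ring_1) \<Rightarrow> ('k \<Rightarrow> 's::ring_1) \<Rightarrow> 'x::ab_group_add set
     \<Rightarrow> ('r \<Rightarrow> 'x \<Rightarrow> 'x) \<Rightarrow> ('x \<Rightarrow> 's \<Rightarrow> 'x) \<Rightarrow> bool" where
  "bimod \<iota>R \<iota>S X la ra \<longleftrightarrow>
     0 \<in> X \<and> (\<forall>x\<in>X. \<forall>y\<in>X. x + y \<in> X) \<and> (\<forall>x\<in>X. - x \<in> X)
   \<and> (\<forall>r. \<forall>x\<in>X. la r x \<in> X) \<and> (\<forall>s. \<forall>x\<in>X. ra x s \<in> X)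
   \<and> (\<forall>r r'. \<forall>x\<in>X. la (r + r') x = la r x + la r' x)
   \<and> (\<forall>r. \<forall>x\<in>X. \<forall>y\<in>X. la r (x + y) = la r x + la r y)
   \<and> (\<forall>r r'. \<forall>x\<in>X. la (r * r') x = la r (la r' x))
   \<and> (\<forall>x\<in>X. la 1 x = x)
   \<and> (\<forall>s s'. \<forall>x\<in>X. ra x (s + s') = ra x s + ra x s')
   \<and> (\<forall>s. \<forall>x\<in>X. \<forall>y\<in>X. ra (x + y) s = ra x s + ra y s)
   \<and> (\<forall>s s'. \<forall>x\<in>X. ra x (s * s') = ra (ra x s) s')
   \<and> (\<forall>x\<in>X. ra x 1 = x)
   \<and> (\<forall>r s. \<forall>x\<in>X. ra (la r x) s = la r (ra x s))
   \<and> (\<forall>c. \<forall>x\<in>X. la (\<iota>R c) x = ra x (\<iota>S c))"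

text \<open>Formal Z-linear combination (element of the free abelian group on pairs) given by a list of pairs.\<close>
definition formal :: "('x \<times> 'y) list \<Rightarrow> ('x \<times> 'y \<Rightarrow> int)" where
  "formal ps = (\<lambda>p. int (count_list ps p))"

text \<open>The subgroup of the free abelian group on X \<times> Y generated by the defining relations
  of the tensor product X \<otimes>_S Y.\<close>
inductive_set tens_rel :: "'x::ab_group_add set \<Rightarrow> 'y::ab_group_add set \<Rightarrow> ('x \<Rightarrow> 's \<Rightarrow> 'x)
    \<Rightarrow> ('s \<Rightarrow> 'y \<Rightarrow> 'y) \<Rightarrow> ('x \<times> 'y \<Rightarrow> int) set"
  for X Y ra la where
  zero: "(\<lambda>_. 0) \<in> tens_rel X Y ra la"
| addl: "\<lbrakk>x \<in> X; x' \<in> X; y \<in> Y\<rbrakk> \<Longrightarrow>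
     formal [(x + x', y)] - formal [(x, y)] - formal [(x', y)] \<in> tens_rel X Y ra la"
| addr: "\<lbrakk>x \<in> X; y \<in> Y; y' \<in> Y\<rbrakk> \<Longrightarrow>
     formal [(x, y + y')] - formal [(x, y)] - formal [(x, y')] \<in> tens_rel X Y ra la"
| bal: "\<lbrakk>x \<in> X; y \<in> Y\<rbrakk> \<Longrightarrow>
     formal [(ra x s, y)] - formal [(x, la s y)] \<in> tens_rel X Y ra la"
| plus: "\<lbrakk>u \<in> tens_rel X Y ra la; v \<in> tens_rel X Y ra la\<rbrakk> \<Longrightarrow> u + v \<in> tens_rel X Y ra la"
| neg: "u \<in> tens_rel X Y ra la \<Longrightarrow> - u \<in> tens_rel X Y ra la"

text \<open>For an (R,S)-bimodule X and an (S,T)-bimodule Y, tensor_iso says that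
  X \<otimes>_S Y (free abelian group on X \<times> Y modulo tens_rel) is isomorphic, as an (R,T)-bimodule,
  to the (R,T)-bimodule Z: there is a balanced biadditive bi-equivariant map beta whose induced
  map on the tensor product is bijective.\<close>
definition tensor_iso :: "'x::ab_group_add set \<Rightarrow> ('r \<Rightarrow> 'x \<Rightarrow> 'x) \<Rightarrow> ('x \<Rightarrow> 's \<Rightarrow> 'x)
    \<Rightarrow> 'y::ab_group_add set \<Rightarrow> ('s \<Rightarrow> 'y \<Rightarrow> 'y) \<Rightarrow> ('y \<Rightarrow> 't \<Rightarrow> 'y)
    \<Rightarrow> 'z::ab_group_add set \<Rightarrow> ('r \<Rightarrow> 'z \<Rightarrow> 'z) \<Rightarrow> ('z \<Rightarrow> 't \<Rightarrow> 'z) \<Rightarrow> bool" where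
  "tensor_iso X laX raX Y laY raY Z laZ raZ \<longleftrightarrow>
    (\<exists>\<beta> :: 'x \<Rightarrow> 'y \<Rightarrow> 'z.
       (\<forall>x\<in>X. \<forall>y\<in>Y. \<beta> x y \<in> Z)
     \<and> (\<forall>x\<in>X. \<forall>x'\<in>X. \<forall>y\<in>Y. \<beta> (x + x') y = \<beta> x y + \<beta> x' y)
     \<and> (\<forall>x\<in>X. \<forall>y\<in>Y. \<forall>y'\<in>Y. \<beta> x (y + y') = \<beta> x y + \<beta> x y')
     \<and> (\<forall>s. \<forall>x\<in>X. \<forall>y\<in>Y. \<beta> (raX x s) y = \<beta> x (laY s y))
     \<and> (\<forall>r. \<forall>x\<in>X. \<forall>y\<in>Y. \<beta> (laX r x) y = laZ r (\<beta> x y))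
     \<and> (\<forall>t. \<forall>x\<in>X. \<forall>y\<in>Y. \<beta> x (raY y t) = raZ (\<beta> x y) t)
     \<and> (\<forall>z\<in>Z. \<exists>ps. set ps \<subseteq> X \<times> Y \<and> z = (\<Sum>(x, y)\<leftarrow>ps. \<beta> x y))
     \<and> (\<forall>ps qs. set ps \<subseteq> X \<times> Y \<longrightarrow> set qs \<subseteq> X \<times> Y \<longrightarrow>
           (\<Sum>(x, y)\<leftarrow>ps. \<beta> x y) = (\<Sum>(x, y)\<leftarrow>qs. \<beta> x y) \<longrightarrow>
           formal ps - formal qs \<in> tens_rel X Y raX laY))"

definition alg_inverse :: "('k::comm_ring_1 \<Rightarrow> 'a::ring_1) \<Rightarrow> ('k \<Rightarrow> 'b::ring_1)
    \<Rightarrow> 'm::ab_group_add set \<Rightarrow> ('a \<Rightarrow> 'm \<Rightarrow> 'm) \<Rightarrow> ('m \<Rightarrow> 'b \<Rightarrow> 'm)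
    \<Rightarrow> 'n::ab_group_add set \<Rightarrow> ('b \<Rightarrow> 'n \<Rightarrow> 'n) \<Rightarrow> ('n \<Rightarrow> 'a \<Rightarrow> 'n) \<Rightarrow> bool" where
  "alg_inverse \<iota>A \<iota>B M laM raM N laN raN \<longleftrightarrow>
     bimod \<iota>B \<iota>A N laN raN
   \<and> tensor_iso M laM raM N laN raN (UNIV :: 'a set) (*) (*)
   \<and> tensor_iso N laN raN M laM raM (UNIV :: 'b set) (*) (*)"

text \<open>Invertibility in Alg of the morphism (iso class of) M, with the inverse taken from type 'n.\<close>
definition alg_invertible_in :: "'n::ab_group_add itself \<Rightarrow> ('k::comm_ring_1 \<Rightarrow> 'a::ring_1) \<Rightarrow> ('k \<Rightarrow> 'b::ring_1)
    \<Rightarrow> 'm::ab_group_add set \<Rightarrow> ('a \<Rightarrow> 'm \<Rightarrow> 'm) \<Rightarrow> ('m \<Rightarrow> 'b \<Rightarrow> 'm) \<Rightarrow> bool" where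
  "alg_invertible_in _ \<iota>A \<iota>B M laM raM \<longleftrightarrow>
     (\<exists>(N :: 'n set) laN raN. alg_inverse \<iota>A \<iota>B M laM raM N laN raN)"

text \<open>The modulation of f: the left ideal A f(1_B) with a x b = a x f(b).\<close>
definition modulation_carrier :: "('b::ring_1 \<Rightarrow> 'a::ring_1) \<Rightarrow> 'a set" where
  "modulation_carrier f = {a * f 1 | a. True}"

definition modulation_ract :: "('b::ring_1 \<Rightarrow> 'a::ring_1) \<Rightarrow> 'a \<Rightarrow> 'b \<Rightarrow> 'a" where
  "modulation_ract f x b = x * f b"

definition zero_divisor :: "'a::ring_1 \<Rightarrow> bool" where
  "zero_divisor z \<longleftrightarrow> (\<exists>a. a \<noteq> 0 \<and> (a * z = 0 \<or> z * a = 0))"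

end

theory Submission
  imports Defs "HOL-Library.Multiset"
begin

lemma formal_Cons: "formal (p # ps) = formal [p] + formal ps"
  by (auto simp: formal_def fun_eq_iff)

lemma formal_append: "formal (ps @ qs) = formal ps + formal qs"
  by (auto simp: formal_def fun_eq_iff)

lemma formal_Nil: "formal [] = (\<lambda>_. 0)"
  by (auto simp: formal_def fun_eq_iff)

lemma tens_rel_diff: "u \<in> tens_rel X Y ra la \<Longrightarrow> v \<in> tens_rel X Y ra la \<Longrightarrow> u - v \<in> tens_rel X Y ra la"
  using tens_rel.plus[OF _ tens_rel.neg, of u X Y ra la v] by simp

lemma tens_rel_inv:
  fixes \<Phi> :: "'x::ab_group_add \<Rightarrow> 'y::ab_group_add \<Rightarrow> 'g::ab_group_add"
  assumes "u \<in> tens_rel X Y ra la"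
    and a1: "\<forall>x\<in>X. \<forall>x'\<in>X. \<forall>y\<in>Y. \<Phi> (x+x') y = \<Phi> x y + \<Phi> x' y"
    and a2: "\<forall>x\<in>X. \<forall>y\<in>Y. \<forall>y'\<in>Y. \<Phi> x (y+y') = \<Phi> x y + \<Phi> x y'"
    and b: "\<forall>s. \<forall>x\<in>X. \<forall>y\<in>Y. \<Phi> (ra x s) y = \<Phi> x (la s y)"
  shows "\<exists>ps qs. u = formal ps - formal qs \<and> (\<Sum>(x,y)\<leftarrow>ps. \<Phi> x y) = (\<Sum>(x,y)\<leftarrow>qs. \<Phi> x y)"
  using assms(1)
proof (induction rule: tens_rel.induct)
  case zero
  show ?case by (rule exI[of _ "[]"], rule exI[of _ "[]"]) (simp add: formal_Nil fun_eq_iff)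
next
  case (addl x x' y)
  show ?case
    apply (rule exI[of _ "[(x+x',y)]"], rule exI[of _ "[(x,y),(x',y)]"])
    using addl a1 by (simp add: formal_Cons[of _ "[_]"] fun_eq_iff)
next
  case (addr x y y')
  show ?case
    apply (rule exI[of _ "[(x,y+y')]"], rule exI[of _ "[(x,y),(x,y')]"])
    using addr a2 by (simp add: formal_Cons[of _ "[_]"] fun_eq_iff)
next
  case (bal x y s)
  show ?case
    apply (rule exI[of _ "[(ra x s,y)]"], rule exI[of _ "[(x,la s y)]"])
    using bal b by simp
next
  case (plus u v)
  then obtain p1 q1 p2 q2 where "u = formal p1 - formal q1" "(\<Sum>(x,y)\<leftarrow>p1. \<Phi> x y) = (\<Sum>(x,y)\<leftarrow>q1. \<Phi> x y)"
     "v = formal p2 - formal q2" "(\<Sum>(x,y)\<leftarrow>p2. \<Phi> x y) = (\<Sum>(x,y)\<leftarrow>q2. \<Phi> x y)" by blast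
  moreover have "u + v = formal (p1 @ p2) - formal (q1 @ q2)"
    unfolding formal_append `u = _` `v = _` by (rule ext) (simp add: algebra_simps)
  ultimately show ?case
    by (intro exI[of _ "p1 @ p2"] exI[of _ "q1 @ q2"]) simp
next
  case (neg u)
  then obtain p q where "u = formal p - formal q" "(\<Sum>(x,y)\<leftarrow>p. \<Phi> x y) = (\<Sum>(x,y)\<leftarrow>q. \<Phi> x y)" by blast
  then show ?case
    by (intro exI[of _ q] exI[of _ p]) simp
qed

lemma formal_eq_sum:
  assumes "formal ps = formal qs"
  shows "(\<Sum>(x,y)\<leftarrow>ps. (\<Phi> x y :: 'g::ab_group_add)) = (\<Sum>(x,y)\<leftarrow>qs. \<Phi> x y)"
proof -
  have "mset ps = mset qs"
    using assms by (auto simp: multiset_eq_iff count_mset formal_def fun_eq_iff)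
  then show ?thesis
    by (metis mset_map sum_mset_sum_list)
qed

lemma tens_rel_sum:
  fixes \<Phi> :: "'x::ab_group_add \<Rightarrow> 'y::ab_group_add \<Rightarrow> 'g::ab_group_add"
  assumes "formal ps - formal qs \<in> tens_rel X Y ra la"
    and a1: "\<forall>x\<in>X. \<forall>x'\<in>X. \<forall>y\<in>Y. \<Phi> (x+x') y = \<Phi> x y + \<Phi> x' y"
    and a2: "\<forall>x\<in>X. \<forall>y\<in>Y. \<forall>y'\<in>Y. \<Phi> x (y+y') = \<Phi> x y + \<Phi> x y'"
    and b: "\<forall>s. \<forall>x\<in>X. \<forall>y\<in>Y. \<Phi> (ra x s) y = \<Phi> x (la s y)"
  shows "(\<Sum>(x,y)\<leftarrow>ps. \<Phi> x y) = (\<Sum>(x,y)\<leftarrow>qs. \<Phi> x y)"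
proof -
  obtain ps' qs' where e: "formal ps - formal qs = formal ps' - formal qs'"
    and s: "(\<Sum>(x,y)\<leftarrow>ps'. \<Phi> x y) = (\<Sum>(x,y)\<leftarrow>qs'. \<Phi> x y)"
    using tens_rel_inv[OF assms] by blast
  have "formal (ps @ qs') = formal (ps' @ qs)"
    using e by (simp add: formal_append fun_eq_iff algebra_simps)
  from formal_eq_sum[OF this, of \<Phi>] s show ?thesis
    by (simp add: algebra_simps)
qed

lemma sum_left_zero:
  fixes c :: "'a::ring"
  assumes "set ps \<subseteq> X \<times> Y" "\<forall>x\<in>X. \<forall>y\<in>Y. c * h x y = 0"
  shows "c * (\<Sum>(x,y)\<leftarrow>ps. h x y) = 0"
  using assms by (induction ps) (auto simp: distrib_left)

lemma sum_right_zero: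
  fixes c :: "'a::ring"
  assumes "set ps \<subseteq> X \<times> Y" "\<forall>x\<in>X. \<forall>y\<in>Y. h x y * c = 0"
  shows "(\<Sum>(x,y)\<leftarrow>ps. h x y) * c = 0"
  using assms by (induction ps) (auto simp: distrib_right)

lemma unit_normal:
  fixes raX :: "'a::ring_1 \<Rightarrow> 's \<Rightarrow> 'a" and laY :: "'s \<Rightarrow> 'a \<Rightarrow> 'a"
  assumes H: "\<forall>a. \<exists>s. (\<forall>x. raX x s = x * a) \<and> (\<forall>y. laY s y = a * y)"
  shows "formal ps - formal [((\<Sum>(x,y)\<leftarrow>ps. x*y), 1)] \<in> tens_rel UNIV UNIV raX laY"
proof (induction ps)
  case Nil
  have "formal [(0+0, 1::'a)] - formal [(0::'a,1)] - formal [(0,1)] \<in> tens_rel UNIV UNIV raX laY"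
    by (rule tens_rel.addl) auto
  moreover have "formal [] - formal [(0::'a,1::'a)] = formal [(0+0, 1::'a)] - formal [(0::'a,1)] - formal [(0,1)]"
    by (simp add: formal_def fun_eq_iff)
  moreover have "(\<Sum>(x,y)\<leftarrow>([]::('a\<times>'a) list). x*y) = 0" by simp
  ultimately show ?case by metis
next
  case (Cons p ps)
  obtain x y where p: "p = (x,y)" by fastforce
  define S where "S = (\<Sum>(x,y)\<leftarrow>ps. x*y)"
  obtain s where s: "\<forall>x. raX x s = x * y" "\<forall>z. laY s z = y * z" using H by blast
  have 1: "formal [(x*y, 1)] - formal [(x,y)] \<in> tens_rel UNIV UNIV raX laY"
    using tens_rel.bal[of x UNIV 1 UNIV raX s laY] s by simp
  have 2: "formal [(x*y+S, 1)] - formal [(x*y,1)] - formal [(S,1)] \<in> tens_rel UNIV UNIV raX laY"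
    by (rule tens_rel.addl) auto
  have 3: "formal ps - formal [(S, 1)] \<in> tens_rel UNIV UNIV raX laY" using Cons.IH unfolding S_def .
  have "formal (p # ps) - formal [((\<Sum>(x,y)\<leftarrow>p#ps. x*y), 1)]
     = (formal ps - formal [(S, 1)]) - (formal [(x*y, 1)] - formal [(x,y)])
        - (formal [(x*y+S, 1)] - formal [(x*y,1)] - formal [(S,1)])"
    by (simp add: p S_def formal_Cons[of _ ps] algebra_simps)
  then show ?case using 1 2 3 by (metis tens_rel_diff)
qed

lemma unit_tiso:
  fixes raX :: "'a::ring_1 \<Rightarrow> 's \<Rightarrow> 'a" and laY :: "'s \<Rightarrow> 'a \<Rightarrow> 'a" and c :: "'a \<Rightarrow> 'z::ab_group_add"
  assumes H: "\<forall>a. \<exists>s. (\<forall>x. raX x s = x * a) \<and> (\<forall>y. laY s y = a * y)"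
    and ca: "\<forall>x y. c (x + y) = c x + c y" and ci: "inj c"
  shows "\<forall>ps qs. set ps \<subseteq> UNIV \<times> UNIV \<longrightarrow> set qs \<subseteq> UNIV \<times> UNIV \<longrightarrow>
           (\<Sum>(x, y)\<leftarrow>ps. c (x * y)) = (\<Sum>(x, y)\<leftarrow>qs. c (x * y)) \<longrightarrow>
           formal ps - formal qs \<in> tens_rel UNIV UNIV raX laY"
proof (intro allI impI)
  fix ps qs :: "('a \<times> 'a) list"
  have c0: "c 0 = 0" using ca[rule_format, of 0 0] by simp
  have cs: "(\<Sum>(x, y)\<leftarrow>ps. c (x * y)) = c (\<Sum>(x, y)\<leftarrow>ps. x * y)" for ps :: "('a \<times> 'a) list"
    by (induction ps) (auto simp: c0 ca)
  assume "(\<Sum>(x, y)\<leftarrow>ps. c (x * y)) = (\<Sum>(x, y)\<leftarrow>qs. c (x * y))"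
  then have e: "(\<Sum>(x, y)\<leftarrow>ps. x * y) = (\<Sum>(x, y)\<leftarrow>qs. x * y)" using ci cs by (metis injD)
  have "formal ps - formal qs = (formal ps - formal [((\<Sum>(x,y)\<leftarrow>ps. x*y), 1)])
     - (formal qs - formal [((\<Sum>(x,y)\<leftarrow>qs. x*y), 1)])" using e by simp
  then show "formal ps - formal qs \<in> tens_rel UNIV UNIV raX laY"
    using unit_normal[OF H] tens_rel_diff by metis
qed


lemma dir2:
  fixes \<iota>A :: "'k::comm_ring_1 \<Rightarrow> 'a::ring_1" and \<iota>B :: "'k \<Rightarrow> 'b::ring_1" and f :: "'b \<Rightarrow> 'a"
  assumes kA: "k_algebra \<iota>A"
    and hom: "alg_hom_nonunital \<iota>A \<iota>B f"
    and inj: "inj f" and rng: "range f = modulation_carrier f" and nzd: "\<not> zero_divisor (f 1)"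
  shows "alg_invertible_in TYPE('a) \<iota>A \<iota>B (modulation_carrier f) (*) (modulation_ract f)"
proof -
  have fa: "\<And>x y. f (x+y) = f x + f y" and fm: "\<And>x y. f (x*y) = f x * f y"
    and fk: "\<And>c x. f (\<iota>B c * x) = \<iota>A c * f x"
    using hom unfolding alg_hom_nonunital_def by auto
  have kc: "\<And>c a. \<iota>A c * a = a * \<iota>A c" using kA unfolding k_algebra_def by auto
  have e: "f 1 * f 1 = f 1" using fm[of 1 1] by simp
  have "f 1 * (1 - f 1) = 0" by (simp add: right_diff_distrib e)
  then have f1: "f 1 = 1" using nzd unfolding zero_divisor_def by force
  have MC: "modulation_carrier f = UNIV" unfolding modulation_carrier_def f1 by auto
  have sf: "surj f" using rng MC by simp
  define g where "g = inv f"
  have fg: "\<And>a. f (g a) = a" unfolding g_def using sf by (simp add: surj_f_inv_f)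
  have gf: "\<And>b. g (f b) = b" unfolding g_def using inj by simp
  have ga: "\<And>x y. g (x+y) = g x + g y" by (metis fa fg gf)
  have gm: "\<And>x y. g (x*y) = g x * g y" by (metis fm fg gf)
  have gi: "inj g" by (metis fg injI)
  have fi: "\<And>c. f (\<iota>B c) = \<iota>A c" using fk[of _ 1] f1 by simp
  have ra: "\<And>x b. modulation_ract f x b = x * f b" by (simp add: modulation_ract_def)
  have B: "bimod \<iota>B \<iota>A (UNIV :: 'a set) (\<lambda>b y. f b * y) (*)"
    unfolding bimod_def by (simp add: fa fm fi kc algebra_simps f1)
  have T1: "tensor_iso (UNIV :: 'a set) (*) (modulation_ract f) (UNIV :: 'a set) (\<lambda>b y. f b * y) (*)
        (UNIV :: 'a set) (*) (*)"
    unfolding tensor_iso_def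
  proof (rule exI[of _ "\<lambda>x y. x * y"], intro conjI)
    show "\<forall>z\<in>(UNIV::'a set). \<exists>ps. set ps \<subseteq> UNIV \<times> UNIV \<and> z = (\<Sum>(x, y)\<leftarrow>ps. x * y)"
    proof -
      have "\<forall>z::'a. set [(z,1::'a)] \<subseteq> UNIV \<times> UNIV \<and> z = (\<Sum>(x, y)\<leftarrow>[(z,1)]. x * y)" by simp
      then show ?thesis by blast
    qed
    have H: "\<forall>a. \<exists>s. (\<forall>x. modulation_ract f x s = x * a) \<and> (\<forall>y. f s * y = a * y)"
      using fg ra by metis
    show "\<forall>ps qs. set ps \<subseteq> UNIV \<times> UNIV \<longrightarrow> set qs \<subseteq> UNIV \<times> UNIV \<longrightarrow>
           (\<Sum>(x, y)\<leftarrow>ps. x * y) = (\<Sum>(x, y)\<leftarrow>qs. x * y) \<longrightarrow>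
           formal ps - formal qs \<in> tens_rel UNIV UNIV (modulation_ract f) (\<lambda>b y. f b * y)"
      using unit_tiso[OF H, of "\<lambda>x. x"] by simp
  qed (auto simp: ra algebra_simps)
  have T2: "tensor_iso (UNIV :: 'a set) (\<lambda>b y. f b * y) (*) (UNIV :: 'a set) (*) (modulation_ract f)
        (UNIV :: 'b set) (*) (*)"
    unfolding tensor_iso_def
  proof (rule exI[of _ "\<lambda>x y. g (x * y)"], intro conjI)
    show "\<forall>z\<in>(UNIV::'b set). \<exists>ps. set ps \<subseteq> UNIV \<times> UNIV \<and> z = (\<Sum>(x, y)\<leftarrow>ps. g (x * y))"
    proof -
      have "\<forall>z::'b. set [(f z,1::'a)] \<subseteq> UNIV \<times> UNIV \<and> z = (\<Sum>(x, y)\<leftarrow>[(f z,1)]. g (x * y))" by (simp add: gf)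
      then show ?thesis by blast
    qed
    have H: "\<forall>a. \<exists>s. (\<forall>x. x * s = x * a) \<and> (\<forall>y. s * y = a * (y::'a))"
      by metis
    show "\<forall>ps qs. set ps \<subseteq> UNIV \<times> UNIV \<longrightarrow> set qs \<subseteq> UNIV \<times> UNIV \<longrightarrow>
           (\<Sum>(x, y)\<leftarrow>ps. g (x * y)) = (\<Sum>(x, y)\<leftarrow>qs. g (x * y)) \<longrightarrow>
           formal ps - formal qs \<in> tens_rel UNIV UNIV (*) (*)"
      using unit_tiso[OF H, of g] ga gi by simp
  qed (auto simp: ra algebra_simps ga gm gf)
  show ?thesis
    unfolding alg_invertible_in_def alg_inverse_def MC
    using B T1 T2 by blast
qed


lemma dir1:
  fixes \<iota>A :: "'k::comm_ring_1 \<Rightarrow> 'a::ring_1" and \<iota>B :: "'k \<Rightarrow> 'b::ring_1" and f :: "'b \<Rightarrow> 'a"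
  assumes hom: "alg_hom_nonunital \<iota>A \<iota>B f"
    and cen: "\<forall>a. f 1 * a = a * f 1"
    and inv: "alg_invertible_in TYPE('n::ab_group_add) \<iota>A \<iota>B (modulation_carrier f) (*) (modulation_ract f)"
  shows "inj f \<and> range f = modulation_carrier f \<and> \<not> zero_divisor (f 1)"
proof -
  have fa: "\<And>x y. f (x+y) = f x + f y" and fm: "\<And>x y. f (x*y) = f x * f y"
    using hom unfolding alg_hom_nonunital_def by auto
  have ra: "\<And>x b. modulation_ract f x b = x * f b" by (simp add: modulation_ract_def)
  obtain N :: "'n set" and laN raN where bm: "bimod \<iota>B \<iota>A N laN raN"
    and TM: "tensor_iso (modulation_carrier f) (*) (modulation_ract f) N laN raN (UNIV :: 'a set) (*) (*)"
    and TN: "tensor_iso N laN raN (modulation_carrier f) (*) (modulation_ract f) (UNIV :: 'b set) (*) (*)"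
    using inv unfolding alg_invertible_in_def alg_inverse_def by blast
  have N0: "0 \<in> N" and Nadd: "\<And>x y. x \<in> N \<Longrightarrow> y \<in> N \<Longrightarrow> x + y \<in> N"
    and Nla: "\<And>r x. x \<in> N \<Longrightarrow> laN r x \<in> N" and Nra: "\<And>s x. x \<in> N \<Longrightarrow> raN x s \<in> N"
    and la2: "\<And>r x y. x \<in> N \<Longrightarrow> y \<in> N \<Longrightarrow> laN r (x + y) = laN r x + laN r y"
    and ra1: "\<And>s x y. x \<in> N \<Longrightarrow> y \<in> N \<Longrightarrow> raN (x + y) s = raN x s + raN y s"
    and ra2: "\<And>s s' x. x \<in> N \<Longrightarrow> raN x (s + s') = raN x s + raN x s'"
    and ram: "\<And>s s' x. x \<in> N \<Longrightarrow> raN x (s * s') = raN (raN x s) s'"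
    and raone: "\<And>x. x \<in> N \<Longrightarrow> raN x 1 = x"
    and rala: "\<And>r s x. x \<in> N \<Longrightarrow> raN (laN r x) s = laN r (raN x s)"
    using bm unfolding bimod_def by auto
  let ?M = "modulation_carrier f"
  from TM obtain \<gamma> :: "'a \<Rightarrow> 'n \<Rightarrow> 'a" where
        \<gamma>1: "\<forall>x\<in>?M. \<forall>x'\<in>?M. \<forall>y\<in>N. \<gamma> (x + x') y = \<gamma> x y + \<gamma> x' y"
    and \<gamma>2: "\<forall>x\<in>?M. \<forall>y\<in>N. \<forall>y'\<in>N. \<gamma> x (y + y') = \<gamma> x y + \<gamma> x y'"
    and \<gamma>L: "\<forall>r. \<forall>x\<in>?M. \<forall>y\<in>N. \<gamma> (r * x) y = r * \<gamma> x y"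
    and \<gamma>R: "\<forall>t. \<forall>x\<in>?M. \<forall>y\<in>N. \<gamma> x (raN y t) = \<gamma> x y * t"
    and \<gamma>S: "\<forall>z\<in>UNIV. \<exists>ps. set ps \<subseteq> ?M \<times> N \<and> z = (\<Sum>(x, y)\<leftarrow>ps. \<gamma> x y)"
    unfolding tensor_iso_def by (elim exE conjE) (rule that; assumption)
  from TN obtain \<beta> :: "'n \<Rightarrow> 'a \<Rightarrow> 'b" where
        \<beta>1: "\<forall>x\<in>N. \<forall>x'\<in>N. \<forall>y\<in>?M. \<beta> (x + x') y = \<beta> x y + \<beta> x' y"
    and \<beta>2: "\<forall>x\<in>N. \<forall>y\<in>?M. \<forall>y'\<in>?M. \<beta> x (y + y') = \<beta> x y + \<beta> x y'"
    and \<beta>b: "\<forall>s. \<forall>x\<in>N. \<forall>y\<in>?M. \<beta> (raN x s) y = \<beta> x (s * y)"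
    and \<beta>L: "\<forall>r. \<forall>x\<in>N. \<forall>y\<in>?M. \<beta> (laN r x) y = r * \<beta> x y"
    and \<beta>R: "\<forall>t. \<forall>x\<in>N. \<forall>y\<in>?M. \<beta> x (modulation_ract f y t) = \<beta> x y * t"
    and \<beta>S: "\<forall>z\<in>UNIV. \<exists>ps. set ps \<subseteq> N \<times> ?M \<and> z = (\<Sum>(x, y)\<leftarrow>ps. \<beta> x y)"
    and \<beta>I: "\<forall>ps qs. set ps \<subseteq> N \<times> ?M \<longrightarrow> set qs \<subseteq> N \<times> ?M \<longrightarrow>
           (\<Sum>(x, y)\<leftarrow>ps. \<beta> x y) = (\<Sum>(x, y)\<leftarrow>qs. \<beta> x y) \<longrightarrow>
           formal ps - formal qs \<in> tens_rel N ?M raN (*)"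
    unfolding tensor_iso_def by (elim exE conjE) (rule that; assumption)
  have memM: "\<And>a. a * f 1 \<in> ?M" unfolding modulation_carrier_def by blast
  have M0: "0 \<in> ?M" using memM[of 0] by simp
  have e2: "f 1 * f 1 = f 1" using fm[of 1 1] by simp
  have kill: "(1 - f 1) * m = 0" if mM: "m \<in> ?M" for m
  proof -
    obtain a where m: "m = a * f 1" using mM unfolding modulation_carrier_def by blast
    have "(1 - f 1) * (a * f 1) = a * f 1 - (f 1 * a) * f 1" by (simp add: algebra_simps)
    also have "\<dots> = a * f 1 - a * (f 1 * f 1)" by (simp only: cen[rule_format, of a] mult.assoc)
    also have "\<dots> = 0" using e2 by simp
    finally show ?thesis using m by simp
  qed
  have \<gamma>0: "\<gamma> 0 n = 0" if nN: "n \<in> N" for n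
  proof -
    have "\<gamma> (0+0) n = \<gamma> 0 n + \<gamma> 0 n" using \<gamma>1 M0 nN by blast
    then show ?thesis by simp
  qed
  have K: "\<forall>x\<in>?M. \<forall>y\<in>N. (1 - f 1) * \<gamma> x y = 0"
  proof (intro ballI)
    fix x y assume x: "x \<in> ?M" and y: "y \<in> N"
    have "(1 - f 1) * \<gamma> x y = \<gamma> ((1 - f 1) * x) y" using \<gamma>L x y by simp
    also have "\<dots> = 0" using kill[OF x] \<gamma>0[OF y] by simp
    finally show "(1 - f 1) * \<gamma> x y = 0" .
  qed
  obtain ps where ps: "set ps \<subseteq> ?M \<times> N" "1 = (\<Sum>(x, y)\<leftarrow>ps. \<gamma> x y)" using \<gamma>S by blast
  have "(1 - f 1) * 1 = 0" using sum_left_zero[OF ps(1) K] ps(2) by simp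
  then have f1: "f 1 = 1" by simp
  have MC: "?M = UNIV" unfolding modulation_carrier_def f1 by auto
  have f0: "f 0 = 0" using fa[of 0 0] by simp
  have \<beta>0: "\<beta> y 0 = 0" if yN: "y \<in> N" for y
  proof -
    have "\<beta> y (0+0) = \<beta> y 0 + \<beta> y 0" using \<beta>2 M0 yN by blast
    then show ?thesis by simp
  qed
  have ker: "b = 0" if fb: "f b = 0" for b
  proof -
    have K: "\<forall>y\<in>N. \<forall>x\<in>?M. \<beta> y x * b = 0"
    proof (intro ballI)
      fix y x assume y: "y \<in> N" and x: "x \<in> ?M"
      have "\<beta> y x * b = \<beta> y (modulation_ract f x b)" using \<beta>R x y by simp
      also have "\<dots> = 0" using fb ra \<beta>0[OF y] by simp
      finally show "\<beta> y x * b = 0" .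
    qed
    obtain ps where ps: "set ps \<subseteq> N \<times> ?M" "1 = (\<Sum>(x, y)\<leftarrow>ps. \<beta> x y)" using \<beta>S by blast
    have "1 * b = 0" using sum_right_zero[OF ps(1) K] ps(2) by simp
    then show ?thesis by simp
  qed
  have injf: "inj f"
  proof (rule injI)
    fix x y assume "f x = f y"
    moreover have "f x = f (x - y) + f y" using fa[of "x - y" y] by simp
    ultimately have "f (x - y) = 0" by simp
    then show "x = y" using ker by fastforce
  qed
  have \<psi>bal: "\<beta> (raN y a) 1 = \<beta> y a" if "y \<in> N" for y a
    using \<beta>b that MC by simp
  have \<psi>inj: "y = y'" if "y \<in> N" "y' \<in> N" "\<beta> y 1 = \<beta> y' 1" for y y'
  proof -
    have "formal [(y,1)] - formal [(y',1)] \<in> tens_rel N ?M raN (*)"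
      using \<beta>I[rule_format, of "[(y,1)]" "[(y',1)]"] that MC by simp
    from tens_rel_sum[OF this, of raN]
    have "raN y 1 = raN y' 1" using ra1 ra2 ram that by simp
    then show ?thesis using raone that by simp
  qed
  have \<psi>surj: "set ps \<subseteq> N \<times> ?M \<longrightarrow> (\<Sum>(y,x)\<leftarrow>ps. raN y x) \<in> N \<and>
       (\<Sum>(y,x)\<leftarrow>ps. \<beta> y x) = \<beta> (\<Sum>(y,x)\<leftarrow>ps. raN y x) 1" for ps
  proof (induction ps)
    case Nil
    have "\<beta> (0+0) 1 = \<beta> 0 1 + \<beta> 0 1" using \<beta>1 N0 MC by blast
    then have "\<beta> 0 1 = 0" by simp
    then show ?case using N0 by simp
  next
    case (Cons p ps)
    obtain y x where p: "p = (y,x)" by fastforce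
    show ?case
    proof
      assume s: "set (p # ps) \<subseteq> N \<times> ?M"
      then have y: "y \<in> N" using p by auto
      from s Cons.IH have IH: "(\<Sum>(y,x)\<leftarrow>ps. raN y x) \<in> N"
         "(\<Sum>(y,x)\<leftarrow>ps. \<beta> y x) = \<beta> (\<Sum>(y,x)\<leftarrow>ps. raN y x) 1" by auto
      have "raN y x \<in> N" using y Nra by blast
      then show "(\<Sum>(y,x)\<leftarrow>p#ps. raN y x) \<in> N \<and>
       (\<Sum>(y,x)\<leftarrow>p#ps. \<beta> y x) = \<beta> (\<Sum>(y,x)\<leftarrow>p#ps. raN y x) 1"
        using IH p Nadd \<beta>1 MC \<psi>bal[OF y, of x] by simp
    qed
  qed
  obtain y0 where y0: "y0 \<in> N" "\<beta> y0 1 = 1"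
  proof -
    obtain ps where "set ps \<subseteq> N \<times> ?M" "1 = (\<Sum>(x, y)\<leftarrow>ps. \<beta> x y)" using \<beta>S by blast
    then have "y0' \<in> N \<and> \<beta> y0' 1 = 1" if "y0' = (\<Sum>(y,x)\<leftarrow>ps. raN y x)" for y0'
      using \<psi>surj[of ps] that by simp
    then show ?thesis using that by blast
  qed
  have repr: "y = laN (\<beta> y 1) y0" if "y \<in> N" for y
    using \<psi>inj[OF that Nla[OF y0(1)]] \<beta>L y0 MC by simp
  have laN0: "laN r 0 = 0" for r using la2[OF N0 N0, of r] by simp
  have \<gamma>0': "\<gamma> m 0 = 0" if mM: "m \<in> ?M" for m
  proof -
    have "\<gamma> m (0+0) = \<gamma> m 0 + \<gamma> m 0" using \<gamma>2 N0 mM by blast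
    then show ?thesis by simp
  qed
  have surjf: "\<exists>b. f b = a" for a
  proof -
    define b where "b = \<beta> (raN y0 a) 1"
    have "\<beta> (raN y0 (f b)) 1 = b"
    proof -
      have "\<beta> (raN y0 (f b)) 1 = \<beta> y0 (f b)" using \<psi>bal y0 by simp
      also have "\<dots> = \<beta> y0 (modulation_ract f 1 b)" by (simp add: ra)
      also have "\<dots> = \<beta> y0 1 * b" using \<beta>R y0 MC by simp
      finally show ?thesis using y0 by simp
    qed
    then have eq: "raN y0 (f b) = raN y0 a" using \<psi>inj[OF Nra[OF y0(1)] Nra[OF y0(1)]] b_def by simp
    define c where "c = f b - a"
    have "raN y0 (f b) = raN y0 c + raN y0 a" using ra2[OF y0(1), of c a] c_def by simp
    then have c0: "raN y0 c = 0" using eq by simp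
    have "\<forall>y\<in>N. raN y c = 0"
    proof
      fix y assume y: "y \<in> N"
      have "raN y c = raN (laN (\<beta> y 1) y0) c" using repr[OF y] by simp
      also have "\<dots> = 0" using rala[OF y0(1)] c0 laN0 by simp
      finally show "raN y c = 0" .
    qed
    then have Z: "\<And>y. y \<in> N \<Longrightarrow> raN y c = 0" by blast
    have K: "\<forall>x\<in>?M. \<forall>y\<in>N. \<gamma> x y * c = 0"
    proof (intro ballI)
      fix x y assume x: "x \<in> ?M" and y: "y \<in> N"
      have "\<gamma> x y * c = \<gamma> x (raN y c)" using \<gamma>R x y by simp
      also have "\<dots> = 0" using Z[OF y] \<gamma>0'[OF x] by simp
      finally show "\<gamma> x y * c = 0" .
    qed
    obtain ps where ps: "set ps \<subseteq> ?M \<times> N" "1 = (\<Sum>(x, y)\<leftarrow>ps. \<gamma> x y)" using \<gamma>S by blast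
    have "1 * c = 0" using sum_right_zero[OF ps(1) K] ps(2) by simp
    then show ?thesis using c_def by (intro exI[of _ b]) simp
  qed
  have "range f = ?M" using surjf MC by (auto intro: range_eqI[OF sym])
  moreover have "\<not> zero_divisor (f 1)" unfolding zero_divisor_def f1 by simp
  ultimately show ?thesis using injf by blast
qed

theorem lemma2p3:
  fixes \<iota>A :: "'k::comm_ring_1 \<Rightarrow> 'a::ring_1" and \<iota>B :: "'k \<Rightarrow> 'b::ring_1" and f :: "'b \<Rightarrow> 'a"
  assumes "k_algebra \<iota>A" and "k_algebra \<iota>B"
    and "alg_hom_nonunital \<iota>A \<iota>B f"
    and "\<forall>a. f 1 * a = a * f 1"
  shows "(alg_invertible_in TYPE('n::ab_group_add) \<iota>A \<iota>B (modulation_carrier f) (*) (modulation_ract f)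
            \<longrightarrow> inj f \<and> range f = modulation_carrier f \<and> \<not> zero_divisor (f 1))
       \<and> (inj f \<and> range f = modulation_carrier f \<and> \<not> zero_divisor (f 1)
            \<longrightarrow> alg_invertible_in TYPE('a) \<iota>A \<iota>B (modulation_carrier f) (*) (modulation_ract f))"
  using dir1[OF assms(3) assms(4)] dir2[OF assms(1) assms(3)] by blast

end
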